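(* Let $\kappa$ be a cardinal. A liner $X$ is $\kappa$-ranked if and only if it has the $\kappa$-Exchange Property. In particular, a liner is ranked if and only if it has the Exchange Property.
   Context: A liner is a set $X$ of points with a family $\mathcal L$ of subsets called lines such that any two distinct points lie in a unique line and every line contains at least two points. For distinct $x,y$, $\overline{xy}$ is the line containing $x,y$; $\overline{xx}:=\{x\}$. A set $A\subseteq X$ is flat if $\overline{xy}\subseteq A$ for all distinct $x,y\in A$; the flat hull $\overline A$ is the smallest flat containing $A$. The rank $\|A\|$ of $A\subseteq X$ is the smallest cardinality $|B|$ of a set $B\subseteq X$ with $A\subseteq\overline B$. A liner is $\kappa$-ranked if any two flats $A\subseteq B\subseteq X$ of equal finite rank $\|A\|=\|B\|\le\kappa$ are equal; it is ranked if it is $\kappa$-ranked for every cardinal $\kappa$ (equivalently, any flats $A\subseteq B$ of equal finite rank coincide). A liner has the $\kappa$-Exchange Property if for every set $A\subseteq X$ with $|A|<\kappa$ and all points $x\in X$, $y\in\overline{A\cup\{x\}}\setminus\overline A$, we have $x\in\overline{A\cup\{y\}}$. It has the Exchange Property if for every flat $A$ and points $x\in X\setminus A$, $y\in\overline{A\cup\{x\}}\setminus A$, we have $x\in\overline{A\cup\{y\}}$. *)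

theory Defs
  imports Main
begin

definition liner :: "'a set \<Rightarrow> 'a set set \<Rightarrow> bool" where
  "liner X L \<longleftrightarrow>
     (\<forall>l\<in>L. l \<subseteq> X \<and> (\<exists>x\<in>l. \<exists>y\<in>l. x \<noteq> y)) \<and>
     (\<forall>x\<in>X. \<forall>y\<in>X. x \<noteq> y \<longrightarrow> (\<exists>!l. l \<in> L \<and> x \<in> l \<and> y \<in> l))"

definition line_through :: "'a set set \<Rightarrow> 'a \<Rightarrow> 'a \<Rightarrow> 'a set" where
  "line_through L x y = (if x = y then {x} else (THE l. l \<in> L \<and> x \<in> l \<and> y \<in> l))"

definition flat :: "'a set \<Rightarrow> 'a set set \<Rightarrow> 'a set \<Rightarrow> bool" where
  "flat X L A \<longleftrightarrow> A \<subseteq> X \<and> (\<forall>x\<in>A. \<forall>y\<in>A. x \<noteq> y \<longrightarrow> line_through L x y \<subseteq> A)"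

definition flat_hull :: "'a set \<Rightarrow> 'a set set \<Rightarrow> 'a set \<Rightarrow> 'a set" where
  "flat_hull X L A = \<Inter>{F. flat X L F \<and> A \<subseteq> F}"

definition finite_rank :: "'a set \<Rightarrow> 'a set set \<Rightarrow> 'a set \<Rightarrow> bool" where
  "finite_rank X L A \<longleftrightarrow> (\<exists>B. B \<subseteq> X \<and> finite B \<and> A \<subseteq> flat_hull X L B)"

definition frank :: "'a set \<Rightarrow> 'a set set \<Rightarrow> 'a set \<Rightarrow> nat" where
  "frank X L A = (LEAST n. \<exists>B. B \<subseteq> X \<and> finite B \<and> card B = n \<and> A \<subseteq> flat_hull X L B)"

text \<open>kappa-ranked, where the cardinal kappa is the cardinality of a set K (of any type).
 Finite rank n \<le> kappa is expressed as |{..<n}| \<le>o |K|.\<close>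
definition kappa_ranked :: "'k set \<Rightarrow> 'a set \<Rightarrow> 'a set set \<Rightarrow> bool" where
  "kappa_ranked K X L \<longleftrightarrow>
     (\<forall>A B. flat X L A \<and> flat X L B \<and> A \<subseteq> B \<and> finite_rank X L A \<and> finite_rank X L B \<and>
        frank X L A = frank X L B \<and> (card_of {..<frank X L B}, card_of K) \<in> ordLeq
        \<longrightarrow> A = B)"

definition ranked :: "'a set \<Rightarrow> 'a set set \<Rightarrow> bool" where
  "ranked X L \<longleftrightarrow>
     (\<forall>A B. flat X L A \<and> flat X L B \<and> A \<subseteq> B \<and> finite_rank X L A \<and> finite_rank X L B \<and>
        frank X L A = frank X L B \<longrightarrow> A = B)"

definition kappa_exchange :: "'k set \<Rightarrow> 'a set \<Rightarrow> 'a set set \<Rightarrow> bool" where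
  "kappa_exchange K X L \<longleftrightarrow>
     (\<forall>A. A \<subseteq> X \<and> (card_of A, card_of K) \<in> ordLess \<longrightarrow>
        (\<forall>x\<in>X. \<forall>y \<in> flat_hull X L (insert x A) - flat_hull X L A.
           x \<in> flat_hull X L (insert y A)))"

definition exchange :: "'a set \<Rightarrow> 'a set set \<Rightarrow> bool" where
  "exchange X L \<longleftrightarrow>
     (\<forall>A. flat X L A \<longrightarrow>
        (\<forall>x \<in> X - A. \<forall>y \<in> flat_hull X L (insert x A) - A.
           x \<in> flat_hull X L (insert y A)))"

end

theory Submission
  imports Defs
begin

definition indep :: "'a set \<Rightarrow> 'a set set \<Rightarrow> 'a set \<Rightarrow> bool" where
  "indep X L D \<longleftrightarrow> (\<forall>d\<in>D. d \<notin> flat_hull X L (D - {d}))"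

definition exless :: "'a set \<Rightarrow> 'a set set \<Rightarrow> nat \<Rightarrow> bool" where
  "exless X L n \<longleftrightarrow> (\<forall>A x y. A \<subseteq> X \<and> finite A \<and> card A < n \<and> x \<in> X \<and>
     y \<in> flat_hull X L (insert x A) - flat_hull X L A \<longrightarrow> x \<in> flat_hull X L (insert y A))"

definition rkle :: "'a set \<Rightarrow> 'a set set \<Rightarrow> nat \<Rightarrow> bool" where
  "rkle X L n \<longleftrightarrow> (\<forall>A B. flat X L A \<and> flat X L B \<and> A \<subseteq> B \<and> finite_rank X L A \<and> finite_rank X L B \<and>
        frank X L A = frank X L B \<and> frank X L B \<le> n \<longrightarrow> A = B)"

definition fullex :: "'a set \<Rightarrow> 'a set set \<Rightarrow> bool" where
  "fullex X L \<longleftrightarrow> (\<forall>A x y. A \<subseteq> X \<and> x \<in> X \<and>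
     y \<in> flat_hull X L (insert x A) - flat_hull X L A \<longrightarrow> x \<in> flat_hull X L (insert y A))"

lemma exlessD: "exless X L n \<Longrightarrow> A \<subseteq> X \<Longrightarrow> finite A \<Longrightarrow> card A < n \<Longrightarrow> x \<in> X \<Longrightarrow>
   y \<in> flat_hull X L (insert x A) \<Longrightarrow> y \<notin> flat_hull X L A \<Longrightarrow> x \<in> flat_hull X L (insert y A)"
  unfolding exless_def by blast

lemma rkleD: "rkle X L n \<Longrightarrow> flat X L A \<Longrightarrow> flat X L B \<Longrightarrow> A \<subseteq> B \<Longrightarrow> finite_rank X L A \<Longrightarrow>
   finite_rank X L B \<Longrightarrow> frank X L A = frank X L B \<Longrightarrow> frank X L B \<le> n \<Longrightarrow> A = B"
  unfolding rkle_def by blast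

lemma hull_inc: "A \<subseteq> flat_hull X L A"
  unfolding flat_hull_def by auto

lemma hull_min: "flat X L F \<Longrightarrow> A \<subseteq> F \<Longrightarrow> flat_hull X L A \<subseteq> F"
  unfolding flat_hull_def by auto

lemma hull_mono: "A \<subseteq> B \<Longrightarrow> flat_hull X L A \<subseteq> flat_hull X L B"
  unfolding flat_hull_def by auto

lemma hull_flat_eq: "flat X L F \<Longrightarrow> flat_hull X L F = F"
  using hull_min[of X L F F] hull_inc[of F X L] by auto

lemma frank_le: "B \<subseteq> X \<Longrightarrow> finite B \<Longrightarrow> A \<subseteq> flat_hull X L B \<Longrightarrow> frank X L A \<le> card B"
proof -
  assume a: "B \<subseteq> X" "finite B" "A \<subseteq> flat_hull X L B"
  let ?P = "\<lambda>n. \<exists>B. B \<subseteq> X \<and> finite B \<and> card B = n \<and> A \<subseteq> flat_hull X L B"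
  have "?P (card B)" using a by blast
  hence "Least ?P \<le> card B" by (rule Least_le)
  thus ?thesis unfolding frank_def .
qed

lemma frank_wit: "finite_rank X L A \<Longrightarrow>
   \<exists>B. B \<subseteq> X \<and> finite B \<and> card B = frank X L A \<and> A \<subseteq> flat_hull X L B"
proof -
  assume "finite_rank X L A"
  then obtain B where a: "B \<subseteq> X" "finite B" "A \<subseteq> flat_hull X L B" unfolding finite_rank_def by blast
  let ?P = "\<lambda>n. \<exists>B. B \<subseteq> X \<and> finite B \<and> card B = n \<and> A \<subseteq> flat_hull X L B"
  have "?P (card B)" using a by blast
  hence "\<exists>n. ?P n" by blast
  hence "?P (Least ?P)" by (rule LeastI_ex)
  thus ?thesis unfolding frank_def .
qed

lemma frank_mono: "F \<subseteq> G \<Longrightarrow> finite_rank X L G \<Longrightarrow> frank X L F \<le> frank X L G"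
proof -
  assume FG: "F \<subseteq> G" and G: "finite_rank X L G"
  obtain B where B: "B \<subseteq> X" "finite B" "card B = frank X L G" "G \<subseteq> flat_hull X L B"
    using frank_wit[OF G] by blast
  have "F \<subseteq> flat_hull X L B" using FG B(4) by blast
  hence "frank X L F \<le> card B" using frank_le[OF B(1,2)] by blast
  thus ?thesis using B(3) by simp
qed

context
  fixes X :: "'a set" and L :: "'a set set"
  assumes lin: "liner X L"
begin

lemma flat_X: "flat X L X"
proof -
  have L1: "\<forall>l\<in>L. l \<subseteq> X \<and> (\<exists>x\<in>l. \<exists>y\<in>l. x \<noteq> y)"
    and L2: "\<forall>x\<in>X. \<forall>y\<in>X. x \<noteq> y \<longrightarrow> (\<exists>!l. l \<in> L \<and> x \<in> l \<and> y \<in> l)"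
    using lin unfolding liner_def by (rule conjunct1, rule conjunct2)
  have "line_through L x y \<subseteq> X" if x: "x \<in> X" and y: "y \<in> X" and xy: "x \<noteq> y" for x y
  proof -
    have u: "\<exists>!l. l \<in> L \<and> x \<in> l \<and> y \<in> l" using L2 x y xy by simp
    have "(THE l. l \<in> L \<and> x \<in> l \<and> y \<in> l) \<in> L"
      using theI'[OF u] by (rule conjunct1)
    hence "(THE l. l \<in> L \<and> x \<in> l \<and> y \<in> l) \<subseteq> X" using L1 by simp
    thus ?thesis using xy unfolding line_through_def by simp
  qed
  thus ?thesis unfolding flat_def by simp
qed

lemma hull_flat: "A \<subseteq> X \<Longrightarrow> flat X L (flat_hull X L A)"
proof -
  assume A: "A \<subseteq> X"
  have sub: "flat_hull X L A \<subseteq> X" using hull_min[OF flat_X A] .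
  show ?thesis unfolding flat_def
  proof (intro conjI sub ballI impI)
    fix x y assume x: "x \<in> flat_hull X L A" and y: "y \<in> flat_hull X L A" and xy: "x \<noteq> y"
    show "line_through L x y \<subseteq> flat_hull X L A"
      unfolding flat_hull_def
    proof (rule Inter_greatest)
      fix F assume F: "F \<in> {F. flat X L F \<and> A \<subseteq> F}"
      hence "x \<in> F" "y \<in> F" using x y unfolding flat_hull_def by auto
      thus "line_through L x y \<subseteq> F" using F xy unfolding flat_def by auto
    qed
  qed
qed

lemma hull_sub: "A \<subseteq> X \<Longrightarrow> flat_hull X L A \<subseteq> X"
  using hull_min[OF flat_X] .

lemma hull_subI: "A \<subseteq> flat_hull X L B \<Longrightarrow> B \<subseteq> X \<Longrightarrow> flat_hull X L A \<subseteq> flat_hull X L B"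
  using hull_min[OF hull_flat] by blast

lemma hull_finite:
  assumes A: "A \<subseteq> X" and y: "y \<in> flat_hull X L A"
  shows "\<exists>F \<subseteq> A. finite F \<and> y \<in> flat_hull X L F"
proof -
  define U where "U = \<Union>{flat_hull X L F | F. F \<subseteq> A \<and> finite F}"
  have AU: "A \<subseteq> U"
  proof
    fix a assume "a \<in> A"
    have "a \<in> flat_hull X L {a}" using hull_inc[of "{a}" X L] by auto
    moreover have "{a} \<subseteq> A" "finite {a}" using \<open>a \<in> A\<close> by auto
    ultimately show "a \<in> U" unfolding U_def by blast
  qed
  have "flat X L U"
    unfolding flat_def
  proof (intro conjI ballI impI)
    show "U \<subseteq> X" unfolding U_def
    proof (rule Union_least)
      fix S assume "S \<in> {flat_hull X L F | F. F \<subseteq> A \<and> finite F}"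
      then obtain F where "S = flat_hull X L F" "F \<subseteq> A" by blast
      thus "S \<subseteq> X" using hull_sub A by auto
    qed
    fix u v assume u: "u \<in> U" and v: "v \<in> U" and uv: "u \<noteq> v"
    obtain F1 where F1: "F1 \<subseteq> A" "finite F1" "u \<in> flat_hull X L F1" using u unfolding U_def by blast
    obtain F2 where F2: "F2 \<subseteq> A" "finite F2" "v \<in> flat_hull X L F2" using v unfolding U_def by blast
    let ?F = "F1 \<union> F2"
    have uF: "u \<in> flat_hull X L ?F" "v \<in> flat_hull X L ?F"
      using F1 F2 hull_mono[of F1 ?F X L] hull_mono[of F2 ?F X L] by auto
    have "?F \<subseteq> X" using F1 F2 A by auto
    hence "flat X L (flat_hull X L ?F)" by (rule hull_flat)
    hence "line_through L u v \<subseteq> flat_hull X L ?F" using uF uv unfolding flat_def by auto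
    moreover have "?F \<subseteq> A" "finite ?F" using F1 F2 by auto
    hence "flat_hull X L ?F \<subseteq> U" unfolding U_def by blast
    ultimately show "line_through L u v \<subseteq> U" by blast
  qed
  hence "flat_hull X L A \<subseteq> U" using hull_min AU by blast
  thus ?thesis using y unfolding U_def by blast
qed


lemma exch_find:
  assumes ex: "exless X L n" and S: "finite S" "S \<subseteq> X" and T: "finite T" "T \<subseteq> X"
    and card: "card (S \<union> T) \<le> n" and d1: "d \<in> flat_hull X L (S \<union> T)" and d2: "d \<notin> flat_hull X L S"
  shows "\<exists>c\<in>T. c \<in> flat_hull X L (insert d (S \<union> T - {c}))"
  using T card d1
proof (induction T rule: finite_induct)
  case empty
  thus ?case using d2 by simp
next
  case (insert t T')
  show ?case
  proof (cases "d \<in> flat_hull X L (S \<union> T')")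
    case True
    have "card (S \<union> T') \<le> card (S \<union> insert t T')"
      by (rule card_mono) (use S insert(1) in auto)
    hence "card (S \<union> T') \<le> n" using insert(5) by linarith
    then obtain c where c: "c \<in> T'" "c \<in> flat_hull X L (insert d (S \<union> T' - {c}))"
      using insert True by auto
    have "insert d (S \<union> T' - {c}) \<subseteq> insert d (S \<union> insert t T' - {c})" by auto
    hence "flat_hull X L (insert d (S \<union> T' - {c})) \<subseteq> flat_hull X L (insert d (S \<union> insert t T' - {c}))"
      by (rule hull_mono)
    thus ?thesis using c by auto
  next
    case False
    have tS: "t \<notin> S"
    proof
      assume "t \<in> S"
      hence "S \<union> insert t T' = S \<union> T'" by auto
      thus False using False insert(6) by simp
    qed
    have tX: "t \<in> X" using insert(4) by auto
    have fin: "finite (S \<union> T')" using S insert(1) by auto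
    have "card (S \<union> T') < card (S \<union> insert t T')"
      using tS insert(2) fin by simp
    hence lt: "card (S \<union> T') < n" using insert(5) by linarith
    have "d \<in> flat_hull X L (insert t (S \<union> T')) - flat_hull X L (S \<union> T')"
      using insert(6) False by simp
    hence "t \<in> flat_hull X L (insert d (S \<union> T'))"
      using exlessD[OF ex, of "S \<union> T'" t d] lt fin tX S insert(4) by blast
    moreover have "S \<union> insert t T' - {t} = S \<union> T'" using tS insert(2) by auto
    ultimately show ?thesis by auto
  qed
qed

lemma indep_card:
  assumes ex: "exless X L n" and D: "indep X L D" "finite D" "D \<subseteq> X"
  shows "finite C \<Longrightarrow> C \<subseteq> X \<Longrightarrow> card C \<le> n \<Longrightarrow> D \<subseteq> flat_hull X L C \<Longrightarrow> card D \<le> card C"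
proof (induction "card (D - C)" arbitrary: C)
  case 0
  hence "D \<subseteq> C" using D(2) by auto
  thus ?case using card_mono 0 by blast
next
  case (Suc k C)
  have "D - C \<noteq> {}" using Suc(2) by (metis card.empty nat.distinct(1))
  then obtain d where d: "d \<in> D" "d \<notin> C" by blast
  have dC: "d \<in> flat_hull X L C" using Suc(6) d by auto
  let ?S = "C \<inter> D" and ?T = "C - D"
  have ST: "?S \<union> ?T = C" by auto
  have "flat_hull X L ?S \<subseteq> flat_hull X L (D - {d})" using d by (intro hull_mono) auto
  hence dS: "d \<notin> flat_hull X L ?S" using D(1) d unfolding indep_def by auto
  obtain c where c: "c \<in> ?T" "c \<in> flat_hull X L (insert d (?S \<union> ?T - {c}))"
    using exch_find[OF ex, of ?S ?T d] Suc(3,4,5) dC dS ST by auto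
  define C' where "C' = insert d (C - {c})"
  have c2: "c \<in> flat_hull X L C'" using c ST unfolding C'_def by simp
  have C'X: "C' \<subseteq> X" using Suc(4) d D(3) unfolding C'_def by auto
  have fC': "finite C'" using Suc(3) unfolding C'_def by auto
  have cC: "c \<in> C" using c by auto
  have "card C' = Suc (card (C - {c}))" unfolding C'_def using d Suc(3) by simp
  also have "card (C - {c}) = card C - 1" using cC Suc(3) by (simp add: card_Diff_singleton)
  also have "card C > 0" using cC Suc(3) card_gt_0_iff by blast
  hence "Suc (card C - 1) = card C" by simp
  finally have cardC': "card C' = card C" .
  have "C \<subseteq> flat_hull X L C'"
  proof
    fix x assume "x \<in> C"
    show "x \<in> flat_hull X L C'"
    proof (cases "x = c")
      case True thus ?thesis using c2 by simp
    next
      case False thus ?thesis using \<open>x \<in> C\<close> hull_inc[of C' X L] unfolding C'_def by auto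
    qed
  qed
  hence "flat_hull X L C \<subseteq> flat_hull X L C'" using hull_subI C'X by blast
  hence DC': "D \<subseteq> flat_hull X L C'" using Suc(6) by auto
  have "D - C' = (D - C) - {d}" using c unfolding C'_def by auto
  hence "k = card (D - C')" using Suc(2) d by simp
  hence "card D \<le> card C'" using Suc(1)[of C'] fC' C'X cardC' Suc(5) DC' by simp
  thus ?case using cardC' by simp
qed

lemma indep_extend:
  assumes ex: "exless X L n" and D: "indep X L D" "finite D" "D \<subseteq> X" "card D \<le> n"
    and a: "a \<in> X" "a \<notin> flat_hull X L D"
  shows "indep X L (insert a D)"
  unfolding indep_def
proof
  fix e assume e: "e \<in> insert a D"
  have aD: "a \<notin> D" using a hull_inc[of D X L] by auto
  show "e \<notin> flat_hull X L (insert a D - {e})"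
  proof (cases "e = a")
    case True
    thus ?thesis using aD a by simp
  next
    case False
    hence eD: "e \<in> D" using e by auto
    have eq: "insert a D - {e} = insert a (D - {e})" using False by auto
    show ?thesis
    proof
      assume h: "e \<in> flat_hull X L (insert a D - {e})"
      have "e \<notin> flat_hull X L (D - {e})" using D(1) eD unfolding indep_def by auto
      moreover have "card (D - {e}) < n" using D(2,4) eD
        by (metis card_Diff1_less order_less_le_trans)
      ultimately have "a \<in> flat_hull X L (insert e (D - {e}))"
        using exlessD[OF ex, of "D - {e}" a e] h eq a D(2,3) by auto
      moreover have "insert e (D - {e}) = D" using eD by auto
      ultimately show False using a by simp
    qed
  qed
qed

lemma basis_exists:
  assumes ex: "exless X L n" and A: "A \<subseteq> X" and C: "C \<subseteq> X" "finite C" "card C \<le> n"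
    and AC: "A \<subseteq> flat_hull X L C"
  shows "\<exists>D \<subseteq> A. finite D \<and> indep X L D \<and> A \<subseteq> flat_hull X L D"
proof -
  have bnd: "card D \<le> card C" if "D \<subseteq> A" "finite D" "indep X L D" for D
    using indep_card[OF ex that(3) that(2)] that(1) A C AC by auto
  have "\<exists>D \<subseteq> A. finite D \<and> indep X L D \<and> (k \<le> card D \<or> A \<subseteq> flat_hull X L D)" for k
  proof (induction k)
    case 0
    have "indep X L {}" unfolding indep_def by simp
    thus ?case by auto
  next
    case (Suc k)
    then obtain D where D: "D \<subseteq> A" "finite D" "indep X L D" "k \<le> card D \<or> A \<subseteq> flat_hull X L D" by blast
    show ?case
    proof (cases "A \<subseteq> flat_hull X L D")
      case True thus ?thesis using D by blast
    next
      case False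
      then obtain a where a: "a \<in> A" "a \<notin> flat_hull X L D" by blast
      have "card D \<le> n" using bnd[OF D(1-3)] C by simp
      hence ind: "indep X L (insert a D)" using indep_extend[OF ex D(3) D(2) _ _ _ a(2)] D(1) A a by auto
      have "a \<notin> D" using a hull_inc[of D X L] by auto
      hence "card (insert a D) = Suc (card D)" using D(2) by simp
      thus ?thesis using ind D a False by (intro exI[of _ "insert a D"]) auto
    qed
  qed
  from this[of "Suc (card C)"] obtain D where
    D: "D \<subseteq> A" "finite D" "indep X L D" "Suc (card C) \<le> card D \<or> A \<subseteq> flat_hull X L D" by blast
  thus ?thesis using bnd[OF D(1-3)] by auto
qed

lemma exless_rkle:
  assumes ex: "exless X L n"
  shows "rkle X L n"
  unfolding rkle_def
proof (intro allI impI)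
  fix A B assume h: "flat X L A \<and> flat X L B \<and> A \<subseteq> B \<and> finite_rank X L A \<and> finite_rank X L B \<and>
        frank X L A = frank X L B \<and> frank X L B \<le> n"
  have fA: "flat X L A" and fB: "flat X L B" and AB: "A \<subseteq> B" and rA: "finite_rank X L A"
    and rB: "finite_rank X L B" and eqr: "frank X L A = frank X L B" and rn: "frank X L B \<le> n"
    using h by auto
  obtain CA where CA: "CA \<subseteq> X" "finite CA" "card CA = frank X L A" "A \<subseteq> flat_hull X L CA"
    using frank_wit[OF rA] by blast
  obtain CB where CB: "CB \<subseteq> X" "finite CB" "card CB = frank X L B" "B \<subseteq> flat_hull X L CB"
    using frank_wit[OF rB] by blast
  have AX: "A \<subseteq> X" using fA unfolding flat_def by auto
  have BX: "B \<subseteq> X" using fB unfolding flat_def by auto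
  have cAn: "card CA \<le> n" using CA(3) eqr rn by simp
  have cBn: "card CB \<le> n" using CB(3) rn by simp
  obtain D where D: "D \<subseteq> A" "finite D" "indep X L D" "A \<subseteq> flat_hull X L D"
    using basis_exists[OF ex AX CA(1,2) cAn CA(4)] by blast
  have "flat_hull X L D \<subseteq> A" using hull_min[OF fA D(1)] .
  hence AD: "A = flat_hull X L D" using D(4) by auto
  have DX: "D \<subseteq> X" using D(1) AX by auto
  have "D \<subseteq> flat_hull X L CA" using D(1) CA(4) by auto
  hence cD: "card D \<le> card CA"
    using indep_card[OF ex D(3,2) DX CA(2,1) cAn] by blast
  have Dn: "card D \<le> n" using cD cAn by simp
  have "B \<subseteq> A"
  proof
    fix b assume b: "b \<in> B"
    show "b \<in> A"
    proof (rule ccontr)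
      assume bA: "b \<notin> A"
      have bX: "b \<in> X" using b BX by auto
      have bD: "b \<notin> flat_hull X L D" using bA AD by simp
      have ind: "indep X L (insert b D)"
        using indep_extend[OF ex D(3,2) DX Dn bX bD] .
      have "insert b D \<subseteq> B" using D(1) AB b by auto
      hence "insert b D \<subseteq> flat_hull X L CB" using CB(4) by auto
      moreover have "finite (insert b D)" "insert b D \<subseteq> X" using D(2) DX bX by auto
      ultimately have "card (insert b D) \<le> card CB"
        using indep_card[OF ex ind _ _ CB(2,1) cBn] by blast
      moreover have "b \<notin> D" using bA D(1) by auto
      moreover have "frank X L A \<le> card D" using frank_le[OF DX D(2) D(4)] .
      ultimately show False using D(2) CB(3) CA(3) cD eqr by simp
    qed
  qed
  thus "A = B" using h by auto
qed

lemma rkle_exless: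
  assumes rk: "rkle X L n"
  shows "exless X L n"
  unfolding exless_def
proof (intro allI impI)
  fix A x y assume h: "A \<subseteq> X \<and> finite A \<and> card A < n \<and> x \<in> X \<and>
     y \<in> flat_hull X L (insert x A) - flat_hull X L A"
  hence A: "A \<subseteq> X" "finite A" "card A < n" and x: "x \<in> X"
    and y1: "y \<in> flat_hull X L (insert x A)" and y2: "y \<notin> flat_hull X L A" by auto
  let ?H = "flat_hull X L A"
  have xA: "insert x A \<subseteq> X" using A x by auto
  have yX: "y \<in> X" using y1 hull_sub[OF xA] by auto
  have yA: "insert y A \<subseteq> X" using A yX by auto
  have frH: "finite_rank X L ?H" unfolding finite_rank_def using A(1,2) by blast
  have hle: "frank X L ?H \<le> card A" using frank_le[OF A(1,2)] by blast
  obtain C where C: "C \<subseteq> X" "finite C" "card C = frank X L ?H" "?H \<subseteq> flat_hull X L C"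
    using frank_wit[OF frH] by blast
  have up: "finite_rank X L (flat_hull X L (insert z A)) \<and>
            frank X L (flat_hull X L (insert z A)) \<le> Suc (frank X L ?H)" if z: "z \<in> X" for z
  proof -
    have "A \<subseteq> flat_hull X L C" using C hull_inc[of A X L] by blast
    also have "\<dots> \<subseteq> flat_hull X L (insert z C)" by (rule hull_mono) auto
    finally have zA: "insert z A \<subseteq> flat_hull X L (insert z C)" using hull_inc[of "insert z C" X L] by auto
    have zC: "insert z C \<subseteq> X" "finite (insert z C)" using C z by auto
    have s: "flat_hull X L (insert z A) \<subseteq> flat_hull X L (insert z C)" using zA zC(1) by (rule hull_subI)
    have "frank X L (flat_hull X L (insert z A)) \<le> card (insert z C)" using frank_le[OF zC(1,2) s] .
    also have "\<dots> \<le> Suc (card C)" using C by (simp add: card_insert_if)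
    finally have "frank X L (flat_hull X L (insert z A)) \<le> Suc (frank X L ?H)" using C(3) by simp
    moreover have "finite_rank X L (flat_hull X L (insert z A))" unfolding finite_rank_def using s zC by blast
    ultimately show ?thesis by blast
  qed
  let ?Hy = "flat_hull X L (insert y A)" and ?Hx = "flat_hull X L (insert x A)"
  have "insert y A \<subseteq> ?Hx" using y1 hull_mono[of A "insert x A" X L] hull_inc[of A X L] by auto
  hence HyHx: "?Hy \<subseteq> ?Hx" using xA by (rule hull_subI)
  have HHy: "?H \<subseteq> ?Hy" by (rule hull_mono) auto
  have fl: "flat X L ?H" "flat X L ?Hy" "flat X L ?Hx" using hull_flat[OF A(1)] hull_flat[OF yA] hull_flat[OF xA] by auto
  have "frank X L ?H \<le> frank X L ?Hy" using frank_mono[OF HHy] up[OF yX] by blast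
  moreover have "frank X L ?H \<noteq> frank X L ?Hy"
  proof
    assume eq: "frank X L ?H = frank X L ?Hy"
    hence "?H = ?Hy" using rkleD[OF rk fl(1,2) HHy frH] up[OF yX] hle A by auto
    thus False using y2 hull_inc[of "insert y A" X L] by auto
  qed
  ultimately have ry: "frank X L ?Hy = Suc (frank X L ?H)" using up[OF yX] by linarith
  have "frank X L ?Hy \<le> frank X L ?Hx" using frank_mono[OF HyHx] up[OF x] by blast
  hence "frank X L ?Hy = frank X L ?Hx" using ry up[OF x] by linarith
  hence "?Hy = ?Hx" using rkleD[OF rk fl(2,3) HyHx] up[OF x] up[OF yX] ry hle A by auto
  thus "x \<in> ?Hy" using hull_inc[of "insert x A" X L] by auto
qed

lemma all_exless_full:
  assumes "\<forall>n. exless X L n"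
  shows "fullex X L"
  unfolding fullex_def
proof (intro allI impI)
  fix A x y assume h: "A \<subseteq> X \<and> x \<in> X \<and> y \<in> flat_hull X L (insert x A) - flat_hull X L A"
  obtain F where F: "F \<subseteq> insert x A" "finite F" "y \<in> flat_hull X L F"
    using hull_finite[of "insert x A" y] h by auto
  let ?G = "F - {x}"
  have "F \<subseteq> insert x ?G" by auto
  hence "y \<in> flat_hull X L (insert x ?G)" using F hull_mono[of F "insert x ?G" X L] by blast
  moreover have "y \<notin> flat_hull X L ?G" using h hull_mono[of ?G A X L] F by auto
  moreover have "?G \<subseteq> X" "finite ?G" using F h by auto
  ultimately have "x \<in> flat_hull X L (insert y ?G)"
    using exlessD[OF assms[rule_format, of "Suc (card ?G)"], of ?G x y] h by auto
  moreover have "insert y ?G \<subseteq> insert y A" using F by auto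
  ultimately show "x \<in> flat_hull X L (insert y A)" using hull_mono[of "insert y ?G" "insert y A" X L] by blast
qed

lemma full_exless: "fullex X L \<Longrightarrow> exless X L n"
  unfolding fullex_def exless_def by blast

lemma exchange_full: "exchange X L \<longleftrightarrow> fullex X L"
proof
  assume e: "exchange X L"
  show "fullex X L" unfolding fullex_def
  proof (intro allI impI)
    fix A x y assume h: "A \<subseteq> X \<and> x \<in> X \<and> y \<in> flat_hull X L (insert x A) - flat_hull X L A"
    let ?H = "flat_hull X L A"
    have fH: "flat X L ?H" using hull_flat h by auto
    have AH: "A \<subseteq> ?H" by (rule hull_inc)
    have xH: "x \<notin> ?H"
    proof
      assume "x \<in> ?H"
      hence "insert x A \<subseteq> ?H" using AH by auto
      hence "flat_hull X L (insert x A) \<subseteq> ?H" using hull_min fH by blast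
      thus False using h by auto
    qed
    have "flat_hull X L (insert x A) \<subseteq> flat_hull X L (insert x ?H)" using AH by (intro hull_mono) auto
    hence "y \<in> flat_hull X L (insert x ?H) - ?H" using h by auto
    moreover have xX: "x \<in> X - ?H" using h xH by auto
    ultimately have xy: "x \<in> flat_hull X L (insert y ?H)"
      using e[unfolded exchange_def, rule_format, OF fH xX] by blast
    have s1: "insert y ?H \<subseteq> flat_hull X L (insert y A)"
      using hull_mono[of A "insert y A" X L] hull_inc[of "insert y A" X L] by auto
    have s2: "insert y A \<subseteq> X" using h hull_sub[of "insert x A"] by auto
    have "flat_hull X L (insert y ?H) \<subseteq> flat_hull X L (insert y A)"
      using s1 s2 by (rule hull_subI)
    thus "x \<in> flat_hull X L (insert y A)" using xy by auto
  qed
next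
  assume f: "fullex X L"
  show "exchange X L" unfolding exchange_def
  proof (intro allI impI ballI)
    fix A x y assume A: "flat X L A" and x: "x \<in> X - A" and y: "y \<in> flat_hull X L (insert x A) - A"
    have "A \<subseteq> X" using A unfolding flat_def by auto
    have y': "y \<in> flat_hull X L (insert x A) - flat_hull X L A" using y hull_flat_eq[OF A] by simp
    show "x \<in> flat_hull X L (insert y A)"
      using f[unfolded fullex_def, rule_format, of A x y] \<open>A \<subseteq> X\<close> x y' by blast
  qed
qed

end


lemma card_leq_fin:
  assumes K: "finite K"
  shows "((card_of {..<m::nat}, card_of K) \<in> ordLeq) \<longleftrightarrow> m \<le> card K"
proof -
  have "((card_of {..<m::nat}, card_of K) \<in> ordLeq) \<longleftrightarrow> (\<exists>f. inj_on f {..<m} \<and> f ` {..<m} \<subseteq> K)"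
    using card_of_ordLeq[of "{..<m}" K] by simp
  also have "\<dots> \<longleftrightarrow> m \<le> card K"
  proof
    assume "\<exists>f. inj_on f {..<m} \<and> f ` {..<m} \<subseteq> K"
    then obtain f where "inj_on f {..<m}" "f ` {..<m} \<subseteq> K" by blast
    thus "m \<le> card K" using card_inj_on_le[OF _ _ K] by fastforce
  next
    assume "m \<le> card K"
    thus "\<exists>f. inj_on f {..<m} \<and> f ` {..<m} \<subseteq> K" using card_le_inj[of "{..<m}" K] K by auto
  qed
  finally show ?thesis .
qed

lemma card_leq_inf:
  assumes K: "infinite K"
  shows "(card_of {..<m::nat}, card_of K) \<in> ordLeq"
proof -
  have "(card_of {..<m::nat}, card_of K) \<in> ordLess"
    by (rule finite_ordLess_infinite) (use K in \<open>auto simp: card_of_Well_order Field_card_of card_of_well_order_on\<close>)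
  thus ?thesis by (rule ordLess_imp_ordLeq)
qed

lemma card_less_inf:
  assumes K: "infinite K" and A: "finite A"
  shows "(card_of A, card_of K) \<in> ordLess"
  by (rule finite_ordLess_infinite) (use K A in \<open>auto simp: card_of_Well_order Field_card_of card_of_well_order_on\<close>)

lemma card_less_fin:
  assumes K: "finite K"
  shows "((card_of A, card_of K) \<in> ordLess) \<longleftrightarrow> finite A \<and> card A < card K"
proof -
  have e: "((card_of A, card_of K) \<in> ordLess) \<longleftrightarrow> \<not>(\<exists>f. inj_on f K \<and> f ` K \<subseteq> A)"
    using card_of_ordLess[of K A] by simp
  show ?thesis
  proof (cases "finite A")
    case True
    have "(\<exists>f. inj_on f K \<and> f ` K \<subseteq> A) \<longleftrightarrow> card K \<le> card A"
    proof
      assume "\<exists>f. inj_on f K \<and> f ` K \<subseteq> A"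
      then obtain f where "inj_on f K" "f ` K \<subseteq> A" by blast
      thus "card K \<le> card A" using card_inj_on_le[OF _ _ True] by fastforce
    next
      assume "card K \<le> card A"
      thus "\<exists>f. inj_on f K \<and> f ` K \<subseteq> A" using card_le_inj[of K A] K True by auto
    qed
    thus ?thesis using e True by auto
  next
    case False
    obtain B where B: "finite B" "card B = card K" "B \<subseteq> A"
      using infinite_arbitrarily_large[OF False] by blast
    obtain f where "f ` K \<subseteq> B" "inj_on f K" using card_le_inj[of K B] K B by auto
    hence "\<exists>f. inj_on f K \<and> f ` K \<subseteq> A" using B by blast
    thus ?thesis using e False by auto
  qed
qed

lemma ranked_iff: "ranked X L \<longleftrightarrow> (\<forall>n. rkle X L n)"
  unfolding ranked_def rkle_def by blast

lemma kranked_fin: "finite K \<Longrightarrow> kappa_ranked K X L \<longleftrightarrow> rkle X L (card K)"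
  unfolding kappa_ranked_def rkle_def using card_leq_fin[of K] by simp

lemma kranked_inf: "infinite K \<Longrightarrow> kappa_ranked K X L \<longleftrightarrow> (\<forall>n. rkle X L n)"
  unfolding kappa_ranked_def rkle_def using card_leq_inf[of K] by blast

lemma kexch_fin: "finite K \<Longrightarrow> kappa_exchange K X L \<longleftrightarrow> exless X L (card K)"
  unfolding kappa_exchange_def exless_def using card_less_fin[of K] by auto

lemma kexch_inf1: "infinite K \<Longrightarrow> kappa_exchange K X L \<Longrightarrow> exless X L n"
  unfolding kappa_exchange_def exless_def using card_less_inf[of K] by blast

lemma kexch_inf2: "fullex X L \<Longrightarrow> kappa_exchange K X L"
  unfolding kappa_exchange_def fullex_def by blast

theorem theorem2p3p5:
  fixes X :: "'a set" and L :: "'a set set" and K :: "'k set"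
  assumes "liner X L"
  shows "(kappa_ranked K X L \<longleftrightarrow> kappa_exchange K X L) \<and> (ranked X L \<longleftrightarrow> exchange X L)"
proof -
  have RE: "rkle X L n \<longleftrightarrow> exless X L n" for n
    using exless_rkle[OF assms] rkle_exless[OF assms] by blast
  have full: "(\<forall>n. exless X L n) \<longleftrightarrow> fullex X L"
    using all_exless_full[OF assms] full_exless[OF assms] by blast
  have part2: "ranked X L \<longleftrightarrow> exchange X L"
    using ranked_iff[of X L] RE full exchange_full[OF assms] by blast
  have part1: "kappa_ranked K X L \<longleftrightarrow> kappa_exchange K X L"
  proof (cases "finite K")
    case True
    show ?thesis using kranked_fin[OF True, of X L] kexch_fin[OF True, of X L] RE[of "card K"] by blast
  next
    case False
    show ?thesis
    proof
      assume "kappa_ranked K X L"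
      hence "\<forall>n. rkle X L n" using kranked_inf[OF False, of X L] by blast
      hence "\<forall>n. exless X L n" using RE by blast
      hence "fullex X L" using full by blast
      thus "kappa_exchange K X L" by (rule kexch_inf2)
    next
      assume "kappa_exchange K X L"
      hence "\<forall>n. exless X L n" using kexch_inf1[OF False] by blast
      hence "\<forall>n. rkle X L n" using RE by blast
      thus "kappa_ranked K X L" using kranked_inf[OF False, of X L] by blast
    qed
  qed
  show ?thesis using part1 part2 by blast
qed

end
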